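(* Let $n=2k$ and let $X\subset\mathbb{P}^{n-1}_\mathbb{C}$ be the smooth quadric $\sum_{j=1}^k z_{2j-1}z_{2j}=0$, with the action of $T_\mathbb{C}=(\mathbb{C}^* )^k$ given by $t\cdot(z_1:\dots:z_n)=(t_1z_1:t_1^{-1}z_2:\dots:t_kz_{2k-1}:t_k^{-1}z_{2k})$ and $T=(S^1)^k\subset T_\mathbb{C}$. Let \[\mu(z_1:\dots:z_n)=\frac{1}{\sum_{i=1}^n|z_i|^2}\sum_{j=1}^k(|z_{2j-1}|^2-|z_{2j}|^2)e_j\] be the moment map and $P=\mu(X)=\mathrm{conv}(\pm e_1,\dots,\pm e_k)$. Then for every $u\in\partial P$ the preimage $\mu^{-1}(u)\cap X$ consists of exactly one $T$-orbit; consequently the GIT quotient $Y_{\lambda(u)}$ is a single point.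
   Context: $e_j$ denotes the $j$-th standard basis vector of $\mathbb{R}^k$. For $u\in P$, $Y_{\lambda(u)}$ denotes the GIT quotient $X^{ss}(u)/\!\!/T_\mathbb{C}$, where $X^{ss}(u)$ is the set of $x\in X$ with $u\in\mu(\overline{T_\mathbb{C}\cdot x})$; it is homeomorphic to $\mu^{-1}(u)/T$. *)

theory Defs
  imports "HOL-Analysis.Analysis"
begin

text \<open>Homogeneous coordinates of a point of P^{2k-1} are encoded as a pair (a,b) of vectors
  in C^k with a$j = z_{2j-1}, b$j = z_{2j}; the index type 'k has k = CARD('k) elements.
  Two nonzero pairs represent the same projective point iff they differ by a nonzero scalar.\<close>

type_synonym 'k hcoord = "(complex^'k) \<times> (complex^'k)"

definition quadric :: "'k::finite hcoord set" where
  "quadric = {(a,b). (a,b) \<noteq> 0 \<and> (\<Sum>j\<in>UNIV. a$j * b$j) = 0}"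

definition torus_act :: "complex^'k \<Rightarrow> 'k::finite hcoord \<Rightarrow> 'k hcoord" where
  "torus_act t z = ((\<chi> j. t$j * (fst z)$j), (\<chi> j. inverse (t$j) * (snd z)$j))"

definition compact_torus :: "(complex^'k::finite) set" where
  "compact_torus = {t. \<forall>j. norm (t$j) = 1}"

definition moment_map :: "'k::finite hcoord \<Rightarrow> real^'k" where
  "moment_map z = (1 / (\<Sum>j\<in>UNIV. (norm ((fst z)$j))\<^sup>2 + (norm ((snd z)$j))\<^sup>2)) *\<^sub>R
      (\<chi> j. (norm ((fst z)$j))\<^sup>2 - (norm ((snd z)$j))\<^sup>2)"

definition cross_polytope :: "(real^'k::finite) set" where
  "cross_polytope = convex hull (range (\<lambda>j. axis j 1) \<union> range (\<lambda>j. - axis j 1))"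

definition T_orbit_reps :: "'k::finite hcoord \<Rightarrow> 'k hcoord set" where
  "T_orbit_reps z = {w. \<exists>t\<in>compact_torus. \<exists>c::complex. c \<noteq> 0 \<and> w = (c *s fst (torus_act t z), c *s snd (torus_act t z))}"

end

theory Submission imports Defs begin

definition L1 :: "(real^'k::finite) set" where "L1 = {v. (\<Sum>j\<in>UNIV. \<bar>v$j\<bar>) \<le> 1}"

lemma convex_L1: "convex (L1::(real^'k::finite) set)"
  unfolding convex_def L1_def
proof (intro allI impI ballI, clarsimp)
  fix x y :: "real^'k" and a b :: real
  assume x: "(\<Sum>j\<in>UNIV. \<bar>x$j\<bar>) \<le> 1" and y: "(\<Sum>j\<in>UNIV. \<bar>y$j\<bar>) \<le> 1"
    and a: "0 \<le> a" and b: "0 \<le> b" and ab: "a + b = 1"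
  have "(\<Sum>j\<in>UNIV. \<bar>a * x$j + b * y$j\<bar>) \<le> (\<Sum>j\<in>UNIV. a * \<bar>x$j\<bar> + b * \<bar>y$j\<bar>)"
    by (intro sum_mono) (metis a b abs_mult abs_of_nonneg abs_triangle_ineq)
  also have "\<dots> = a * (\<Sum>j\<in>UNIV. \<bar>x$j\<bar>) + b * (\<Sum>j\<in>UNIV. \<bar>y$j\<bar>)"
    by (simp add: sum.distrib sum_distrib_left)
  also have "\<dots> \<le> a * 1 + b * 1"
    using x y a b by (intro add_mono mult_left_mono) auto
  finally show "(\<Sum>j\<in>UNIV. \<bar>a * x$j + b * y$j\<bar>) \<le> 1" using ab by simp
qed

lemma P_sub_L1: "cross_polytope \<subseteq> (L1::(real^'k::finite) set)"
  unfolding cross_polytope_def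
proof (rule hull_minimal)
  show "convex (L1::(real^'k::finite) set)" by (rule convex_L1)
next
  have "(\<Sum>j\<in>UNIV. \<bar>axis i (1::real) $ j\<bar>) = (\<Sum>j\<in>UNIV. if j = i then 1 else 0)" for i :: 'k
    by (intro sum.cong) (auto simp: axis_def)
  moreover have "(\<Sum>j\<in>UNIV. \<bar>(- axis i (1::real)) $ j\<bar>) = (\<Sum>j\<in>UNIV. if j = i then 1 else 0)" for i :: 'k
    by (intro sum.cong) (auto simp: axis_def)
  ultimately show "range (\<lambda>j. axis j 1) \<union> range (\<lambda>j. - axis j 1) \<subseteq> (L1::(real^'k::finite) set)"
    unfolding L1_def by auto
qed

lemma sum_axis_decomp: "(\<Sum>j\<in>UNIV. (v$j) *\<^sub>R axis j (1::real)) = (v::real^'k::finite)"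
  by (simp add: vec_eq_iff sum_component axis_def mult.commute[of "v$_"] if_distrib cong: if_cong)

lemma L1_sub_P: "(L1::(real^'k::finite) set) \<subseteq> cross_polytope"
proof
  fix v :: "real^'k" assume "v \<in> L1"
  hence s1: "(\<Sum>j\<in>UNIV. \<bar>v$j\<bar>) \<le> 1" by (simp add: L1_def)
  define \<sigma> where "\<sigma> = (\<Sum>j\<in>UNIV. \<bar>v$j\<bar>)"
  define w where "w j = (if v$j \<ge> 0 then axis j (1::real) else - axis j 1)" for j
  have cP: "convex (cross_polytope::(real^'k) set)" unfolding cross_polytope_def by simp
  have wP: "w j \<in> cross_polytope" for j
    unfolding w_def cross_polytope_def by (auto intro: hull_inc)
  have zP: "0 \<in> (cross_polytope::(real^'k) set)"
  proof -
    obtain j :: 'k where True by simp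
    have "(1/2::real) *\<^sub>R axis j 1 + (1/2::real) *\<^sub>R (- axis j 1) \<in> (cross_polytope::(real^'k) set)"
      by (rule convexD[OF cP]) (auto simp: cross_polytope_def intro: hull_inc)
    thus ?thesis by simp
  qed
  have vw: "v = (\<Sum>j\<in>UNIV. \<bar>v$j\<bar> *\<^sub>R w j)"
  proof -
    have "\<bar>v$j\<bar> *\<^sub>R w j = (v$j) *\<^sub>R axis j 1" for j by (simp add: w_def)
    thus ?thesis using sum_axis_decomp[of v] by simp
  qed
  show "v \<in> cross_polytope"
  proof (cases "\<sigma> = 0")
    case True
    hence "\<forall>j. v$j = 0" unfolding \<sigma>_def by (simp add: sum_nonneg_eq_0_iff)
    hence "v = 0" by (simp add: vec_eq_iff)
    thus ?thesis using zP by simp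
  next
    case False
    hence sp: "\<sigma> > 0" unfolding \<sigma>_def by (simp add: order_le_neq_trans sum_nonneg)
    have inP: "(\<Sum>j\<in>UNIV. (\<bar>v$j\<bar>/\<sigma>) *\<^sub>R w j) \<in> cross_polytope"
      by (rule convex_sum[OF _ cP]) (use sp wP in \<open>auto simp: \<sigma>_def sum_divide_distrib[symmetric]\<close>)
    have "\<sigma> *\<^sub>R (\<Sum>j\<in>UNIV. (\<bar>v$j\<bar>/\<sigma>) *\<^sub>R w j) + (1 - \<sigma>) *\<^sub>R 0 \<in> cross_polytope"
      by (rule convexD[OF cP inP zP]) (use sp s1 in \<open>auto simp: \<sigma>_def\<close>)
    moreover have "\<sigma> *\<^sub>R (\<Sum>j\<in>UNIV. (\<bar>v$j\<bar>/\<sigma>) *\<^sub>R w j) = v"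
      using sp by (subst vw) (simp add: scaleR_sum_right)
    ultimately show ?thesis by simp
  qed
qed

lemma frontier_L1:
  assumes "(u::real^'k::finite) \<in> frontier cross_polytope"
  shows "(\<Sum>j\<in>UNIV. \<bar>u$j\<bar>) = 1"
proof -
  have "compact (cross_polytope::(real^'k) set)"
    unfolding cross_polytope_def by (intro compact_convex_hull finite_imp_compact) auto
  hence "closed (cross_polytope::(real^'k) set)" by (rule compact_imp_closed)
  hence uP: "u \<in> cross_polytope" using assms by (simp add: frontier_def)
  hence le: "(\<Sum>j\<in>UNIV. \<bar>u$j\<bar>) \<le> 1" using P_sub_L1 by (auto simp: L1_def)
  have "open {v::real^'k. (\<Sum>j\<in>UNIV. \<bar>v$j\<bar>) < 1}"
    by (intro open_Collect_less continuous_intros)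
  moreover have "{v::real^'k. (\<Sum>j\<in>UNIV. \<bar>v$j\<bar>) < 1} \<subseteq> cross_polytope"
    using L1_sub_P by (auto simp: L1_def)
  ultimately have "(\<Sum>j\<in>UNIV. \<bar>u$j\<bar>) < 1 \<Longrightarrow> u \<in> interior cross_polytope"
    by (meson interior_maximal mem_Collect_eq interiorI)
  moreover have "u \<notin> interior cross_polytope" using assms by (simp add: frontier_def)
  ultimately show ?thesis using le by linarith
qed


lemma moment_comp: "moment_map (a,b) $ j =
   ((norm (a$j))\<^sup>2 - (norm (b$j))\<^sup>2) / (\<Sum>i\<in>UNIV. (norm (a$i))\<^sup>2 + (norm (b$i))\<^sup>2)"
  by (simp add: moment_map_def)

lemma nonzero_pair: "((a::complex^'k::finite), (b::complex^'k)) \<noteq> 0 \<longleftrightarrow> (\<exists>j. a$j \<noteq> 0 \<or> b$j \<noteq> 0)"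
  by (auto simp: zero_prod_def vec_eq_iff)

lemma N_pos:
  assumes "((a::complex^'k::finite), (b::complex^'k)) \<noteq> 0"
  shows "(\<Sum>i\<in>UNIV. (norm (a$i))\<^sup>2 + (norm (b$i))\<^sup>2) > 0"
proof -
  obtain j where j: "a$j \<noteq> 0 \<or> b$j \<noteq> 0" using assms nonzero_pair by blast
  have "(norm (a$j))\<^sup>2 + (norm (b$j))\<^sup>2 > 0" using j by (auto simp: add_pos_nonneg add_nonneg_pos)
  also have "\<dots> \<le> (\<Sum>i\<in>UNIV. (norm (a$i))\<^sup>2 + (norm (b$i))\<^sup>2)"
    by (rule member_le_sum) auto
  finally show ?thesis .
qed

lemma fiber_split:
  assumes q: "((a::complex^'k::finite), (b::complex^'k)) \<noteq> 0"
    and m: "moment_map (a,b) = u" and s: "(\<Sum>j\<in>UNIV. \<bar>u$j\<bar>) = 1"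
  shows "a$j = 0 \<or> b$j = 0"
proof -
  define N where "N = (\<Sum>i\<in>UNIV. (norm (a$i))\<^sup>2 + (norm (b$i))\<^sup>2)"
  have Np: "N > 0" using N_pos[OF q] by (simp add: N_def)
  have hu: "u$i = ((norm (a$i))\<^sup>2 - (norm (b$i))\<^sup>2) / N" for i
    using m moment_comp[of a b i] by (simp add: N_def)
  have "(\<Sum>i\<in>UNIV. \<bar>(norm (a$i))\<^sup>2 - (norm (b$i))\<^sup>2\<bar>) = (\<Sum>i\<in>UNIV. \<bar>u$i\<bar> * N)"
    using Np by (intro sum.cong) (auto simp: hu abs_divide)
  also have "\<dots> = N" using s by (simp add: sum_distrib_right[symmetric])
  finally have e: "(\<Sum>i\<in>UNIV. ((norm (a$i))\<^sup>2 + (norm (b$i))\<^sup>2) - \<bar>(norm (a$i))\<^sup>2 - (norm (b$i))\<^sup>2\<bar>) = 0"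
    by (simp add: sum_subtractf N_def)
  have "\<forall>i\<in>UNIV. ((norm (a$i))\<^sup>2 + (norm (b$i))\<^sup>2) - \<bar>(norm (a$i))\<^sup>2 - (norm (b$i))\<^sup>2\<bar> = 0"
    by (rule iffD1[OF sum_nonneg_eq_0_iff e]) (auto simp: abs_le_iff)
  hence "((norm (a$j))\<^sup>2 + (norm (b$j))\<^sup>2) - \<bar>(norm (a$j))\<^sup>2 - (norm (b$j))\<^sup>2\<bar> = 0" by simp
  hence "(norm (a$j))\<^sup>2 = 0 \<or> (norm (b$j))\<^sup>2 = 0" by (auto simp: abs_if split: if_splits)
  thus ?thesis by simp
qed


lemma norm_sqrt_sq: "x \<ge> 0 \<Longrightarrow> (norm (complex_of_real (sqrt x)))\<^sup>2 = x"
  by simp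

theorem lemma3p2:
  fixes u :: "real^'k::finite"
  assumes "u \<in> frontier cross_polytope"
  shows "\<exists>z0\<in>quadric. moment_map z0 = u \<and>
           {z \<in> quadric. moment_map z = u} = T_orbit_reps z0"
proof -
  have s: "(\<Sum>j\<in>UNIV. \<bar>u$j\<bar>) = 1" using frontier_L1[OF assms] .
  define a0 :: "complex^'k" where "a0 = (\<chi> j. complex_of_real (sqrt (max (u$j) 0)))"
  define b0 :: "complex^'k" where "b0 = (\<chi> j. complex_of_real (sqrt (max (- u$j) 0)))"
  have na0: "(norm (a0$j))\<^sup>2 = max (u$j) 0" for j by (simp add: a0_def)
  have nb0: "(norm (b0$j))\<^sup>2 = max (- u$j) 0" for j by (simp add: b0_def)
  have ab0: "a0$j * b0$j = 0" for j by (simp add: a0_def b0_def max_def)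
  obtain j0 where j0: "u$j0 \<noteq> 0"
    using s by (metis (no_types, lifting) abs_zero sum.neutral zero_neq_one)
  have a0j0: "a0$j0 \<noteq> 0 \<or> b0$j0 \<noteq> 0"
    using j0 by (auto simp: a0_def b0_def max_def)
  have nz0: "(a0, b0) \<noteq> 0" using a0j0 nonzero_pair by blast
  have z0q: "(a0,b0) \<in> quadric" proof -
    have "(\<Sum>j\<in>UNIV. a0$j * b0$j) = 0" by (simp only: ab0 sum.neutral_const)
    thus ?thesis unfolding quadric_def using nz0 by simp
  qed
  have N0: "(\<Sum>i\<in>UNIV. (norm (a0$i))\<^sup>2 + (norm (b0$i))\<^sup>2) = 1"
  proof -
    have "(\<Sum>i\<in>UNIV. (norm (a0$i))\<^sup>2 + (norm (b0$i))\<^sup>2) = (\<Sum>j\<in>UNIV. \<bar>u$j\<bar>)"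
      unfolding na0 nb0 by (intro sum.cong) (auto simp: max_def)
    thus ?thesis using s by simp
  qed
  have m0: "moment_map (a0,b0) = u"
    unfolding vec_eq_iff moment_comp N0 by (simp add: na0 nb0 max_def)
  show ?thesis
  proof (intro bexI[OF _ z0q] conjI m0 equalityI subsetI)
    fix z assume z: "z \<in> T_orbit_reps (a0,b0)"
    then obtain t c where t: "t \<in> compact_torus" and c: "c \<noteq> 0"
      and zeq: "z = (c *s fst (torus_act t (a0,b0)), c *s snd (torus_act t (a0,b0)))"
      unfolding T_orbit_reps_def by blast
    have tn: "norm (t$j) = 1" for j using t by (simp add: compact_torus_def)
    have tnz: "t$j \<noteq> 0" for j using tn[of j] by auto
    define a where "a = c *s fst (torus_act t (a0,b0))"
    define b where "b = c *s snd (torus_act t (a0,b0))"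
    have zab: "z = (a,b)" using zeq a_def b_def by simp
    have na: "(norm (a$j))\<^sup>2 = (norm c)\<^sup>2 * max (u$j) 0" for j
      by (simp add: a_def torus_act_def norm_mult tn power_mult_distrib na0[symmetric])
    have nb: "(norm (b$j))\<^sup>2 = (norm c)\<^sup>2 * max (- u$j) 0" for j
      by (simp add: b_def torus_act_def norm_mult tn norm_inverse power_mult_distrib nb0[symmetric])
    have prod: "a$j * b$j = 0" for j
    proof -
      have "a$j * b$j = c * c * (t$j * inverse (t$j)) * (a0$j * b0$j)"
        by (simp add: a_def b_def torus_act_def algebra_simps)
      thus ?thesis by (simp add: ab0)
    qed
    have "a$j0 \<noteq> 0 \<or> b$j0 \<noteq> 0"
      using a0j0 c tnz by (auto simp: a_def b_def torus_act_def)
    hence nz: "(a,b) \<noteq> 0" using nonzero_pair by blast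
    have N: "(\<Sum>i\<in>UNIV. (norm (a$i))\<^sup>2 + (norm (b$i))\<^sup>2) = (norm c)\<^sup>2"
    proof -
      have "(\<Sum>i\<in>UNIV. (norm (a$i))\<^sup>2 + (norm (b$i))\<^sup>2) = (norm c)\<^sup>2 * (\<Sum>i\<in>UNIV. (norm (a0$i))\<^sup>2 + (norm (b0$i))\<^sup>2)"
        by (simp add: na nb na0 nb0 sum_distrib_left algebra_simps)
      thus ?thesis using N0 by simp
    qed
    have "moment_map (a,b) = u"
      using c unfolding vec_eq_iff moment_comp N by (simp add: na nb max_def field_simps)
    thus "z \<in> {z \<in> quadric. moment_map z = u}"
    proof -
      have "(\<Sum>j\<in>UNIV. a$j * b$j) = 0" by (simp only: prod sum.neutral_const)
      thus ?thesis using nz \<open>moment_map (a,b) = u\<close> by (simp add: zab quadric_def)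
    qed
  next
    fix z assume z: "z \<in> {z \<in> quadric. moment_map z = u}"
    obtain a b where zab: "z = (a,b)" by (cases z)
    have nz: "(a,b) \<noteq> 0" and m: "moment_map (a,b) = u"
      using z zab by (auto simp: quadric_def)
    define N where "N = (\<Sum>i\<in>UNIV. (norm (a$i))\<^sup>2 + (norm (b$i))\<^sup>2)"
    have Np: "N > 0" using N_pos[OF nz] by (simp add: N_def)
    have hu: "u$i = ((norm (a$i))\<^sup>2 - (norm (b$i))\<^sup>2) / N" for i
      using m moment_comp[of a b i] by (simp add: N_def)
    have split: "a$i = 0 \<or> b$i = 0" for i using fiber_split[OF nz m s] .
    define c where "c = complex_of_real (sqrt N)"
    define t :: "complex^'k" where "t = (\<chi> j. if a$j \<noteq> 0 then a$j / complex_of_real (norm (a$j))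
        else if b$j \<noteq> 0 then complex_of_real (norm (b$j)) / b$j else 1)"
    have tT: "t \<in> compact_torus"
      by (simp add: compact_torus_def t_def norm_divide)
    have c0: "c \<noteq> 0" using Np by (simp add: c_def)
    have sN: "sqrt N > 0" using Np by simp
    have compa: "a$j = c * (t$j * a0$j)" for j
    proof (cases "a$j = 0")
      case True
      then have "u$j \<le> 0" using Np by (simp add: hu)
      then show ?thesis using True by (simp add: a0_def max_def)
    next
      case False
      then have bj: "b$j = 0" using split by blast
      have uj: "u$j = (norm (a$j))\<^sup>2 / N" by (simp add: hu bj)
      have "sqrt (max (u$j) 0) = norm (a$j) / sqrt N"
        using Np by (simp add: uj real_sqrt_divide)
      then show ?thesis using False sN
        by (simp add: a0_def t_def c_def field_simps flip: of_real_mult)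
    qed
    have compb: "b$j = c * (inverse (t$j) * b0$j)" for j
    proof (cases "b$j = 0")
      case True
      then have "u$j \<ge> 0" using Np by (simp add: hu)
      then show ?thesis using True by (simp add: b0_def max_def)
    next
      case False
      then have aj: "a$j = 0" using split by blast
      have uj: "- u$j = (norm (b$j))\<^sup>2 / N" by (simp add: hu aj)
      have "sqrt (max (- u$j) 0) = norm (b$j) / sqrt N"
        using Np by (simp add: uj real_sqrt_divide)
      then show ?thesis using False aj sN
        by (simp add: b0_def t_def c_def field_simps flip: of_real_mult)
    qed
    show "z \<in> T_orbit_reps (a0,b0)"
      unfolding T_orbit_reps_def
      using tT c0 compa compb by (auto simp: zab torus_act_def vec_eq_iff)
  qed
qed

end
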